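(* Any $n$-qubit reflection operator $R_{|\psi\rangle}$ can be approximated within Frobenius distance $\varepsilon$ by the product of two reflection operators whose corresponding unit vectors have coordinates in the computational basis of the form $(a+b\sqrt{2}+ci+di\sqrt{2})/2^{m(\varepsilon)}$ (with $a,b,c,d$ integers), where $m(\varepsilon)=\lceil n/2\rceil+O(\log(1/\varepsilon))$, using at most one ancilla. If the unit vector $|\psi\rangle$ has at least two coordinates in the computational basis equal to zero, it is sufficient to use one reflection operator and no ancilla is required.
   Context: For a unit vector $|\psi\rangle$, the reflection operator is $R_{|\psi\rangle}=\mathbb{I}-2|\psi\rangle\langle\psi|$. The Frobenius norm is $\Vert A\Vert_{Fr}^2=\mathrm{Tr}(AA^{\dagger})$. *)

theory Defs
  imports Complex_Main "Jordan_Normal_Form.Matrix"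
begin

definition unit_cvec :: "complex vec \<Rightarrow> bool" where
  "unit_cvec v \<longleftrightarrow> (\<Sum>i<dim_vec v. (cmod (v $ i))\<^sup>2) = 1"

definition outer_prod :: "complex vec \<Rightarrow> complex mat" where
  "outer_prod v = mat (dim_vec v) (dim_vec v) (\<lambda>(i, j). v $ i * cnj (v $ j))"

definition refl_op :: "complex vec \<Rightarrow> complex mat" where
  "refl_op v = 1\<^sub>m (dim_vec v) - (2::complex) \<cdot>\<^sub>m outer_prod v"

text \<open>Frobenius norm: sqrt (Tr (A A^dagger)) = sqrt of the sum of squared moduli of entries.\<close>
definition frobenius_norm :: "complex mat \<Rightarrow> real" where
  "frobenius_norm A = sqrt (\<Sum>i<dim_row A. \<Sum>j<dim_col A. (cmod (A $$ (i, j)))\<^sup>2)"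

text \<open>A \<otimes> I_2 (one ancilla qubit, taken as the least significant qubit).\<close>
definition kron_id2 :: "complex mat \<Rightarrow> complex mat" where
  "kron_id2 A = mat (2 * dim_row A) (2 * dim_col A)
     (\<lambda>(i, j). if i mod 2 = j mod 2 then A $$ (i div 2, j div 2) else 0)"

definition ring_coord :: "nat \<Rightarrow> complex \<Rightarrow> bool" where
  "ring_coord m z \<longleftrightarrow> (\<exists>a b c d :: int.
      z = (of_int a + of_int b * of_real (sqrt 2) + of_int c * \<i> + of_int d * \<i> * of_real (sqrt 2))
          / 2 ^ m)"

end

theory Submission
  imports Defs "HOL-Computational_Algebra.Primes" "HOL-Analysis.L2_Norm"
begin

definition sos4 :: "int \<Rightarrow> bool" where
  "sos4 n \<longleftrightarrow> (\<exists>a b c d. n = a\<^sup>2 + b\<^sup>2 + c\<^sup>2 + d\<^sup>2)"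

lemma euler4: fixes x1 :: int shows
  "(x1\<^sup>2+x2\<^sup>2+x3\<^sup>2+x4\<^sup>2)*(y1\<^sup>2+y2\<^sup>2+y3\<^sup>2+y4\<^sup>2) =
   (x1*y1+x2*y2+x3*y3+x4*y4)\<^sup>2 + (x1*y2-x2*y1+x3*y4-x4*y3)\<^sup>2
 + (x1*y3-x3*y1+x4*y2-x2*y4)\<^sup>2 + (x1*y4-x4*y1+x2*y3-x3*y2)\<^sup>2"
  by (simp add: power2_eq_square algebra_simps)

lemma sos4_mult: "sos4 a \<Longrightarrow> sos4 b \<Longrightarrow> sos4 (a*b)"
  unfolding sos4_def using euler4 by metis

lemma prime_mod:
  fixes p :: int assumes "prime p" "p > 2"
  shows "\<exists>x y. 0 \<le> x \<and> 2*x < p \<and> 0 \<le> y \<and> 2*y < p \<and> p dvd x\<^sup>2+y\<^sup>2+1"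
proof (rule ccontr)
  assume nex: "\<not> ?thesis"
  define h where "h = (p - 1) div 2"
  have odd: "odd p" using assms prime_odd_int by auto
  then obtain k where "p = 2*k+1" by (auto elim: oddE)
  then have p2h: "p = 2*h+1" unfolding h_def by simp
  define A where "A = (\<lambda>x. x\<^sup>2 mod p) ` {0..h}"
  define B where "B = (\<lambda>y. (-1-y\<^sup>2) mod p) ` {0..h}"
  have key: "x = x'" if "x \<in> {0..h}" "x' \<in> {0..h}" "x\<^sup>2 mod p = x'\<^sup>2 mod p" for x x'
  proof -
    have "p dvd x\<^sup>2 - x'\<^sup>2" using that(3) by (simp add: mod_eq_dvd_iff)
    then have "p dvd (x - x') * (x + x')" by (simp add: power2_eq_square algebra_simps)
    then have "p dvd (x - x') \<or> p dvd (x + x')" using assms(1) prime_dvd_mult_iff by blast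
    then show ?thesis
    proof
      assume "p dvd x - x'"
      moreover have "\<bar>x - x'\<bar> < p" using that p2h by auto
      ultimately show ?thesis using dvd_imp_le_int[of "x - x'" p] assms(2) by (cases "x - x' = 0") auto
    next
      assume d: "p dvd x + x'"
      have "0 \<le> x + x'" "x + x' < p" using that p2h by auto
      then have "x + x' = 0" using d dvd_imp_le_int[of "x + x'" p] assms(2) by (cases "x + x' = 0") auto
      then show ?thesis using that by auto
    qed
  qed
  have injA: "inj_on (\<lambda>x. x\<^sup>2 mod p) {0..h}"
  proof (rule inj_onI)
    fix x x' assume "x \<in> {0..h}" "x' \<in> {0..h}" "x\<^sup>2 mod p = x'\<^sup>2 mod p"
    then show "x = x'" by (rule key)
  qed
  have injB: "inj_on (\<lambda>y. (-1-y\<^sup>2) mod p) {0..h}"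
  proof (intro inj_onI)
    fix x x' assume xx: "x \<in> {0..h}" "x' \<in> {0..h}" "(-1-x\<^sup>2) mod p = (-1-x'\<^sup>2) mod p"
    then have "p dvd (-1-x\<^sup>2) - (-1-x'\<^sup>2)" by (simp add: mod_eq_dvd_iff)
    then have "p dvd x'\<^sup>2 - x\<^sup>2" by simp
    then have "x\<^sup>2 mod p = x'\<^sup>2 mod p" by (metis mod_eq_dvd_iff)
    then show "x = x'" using key xx by blast
  qed
  have cA: "card A = nat (h+1)" unfolding A_def using card_image[OF injA] by simp
  have cB: "card B = nat (h+1)" unfolding B_def using card_image[OF injB] by simp
  have disj: "A \<inter> B = {}"
  proof (rule ccontr)
    assume "A \<inter> B \<noteq> {}"
    then obtain u where u: "u \<in> A" "u \<in> B" by blast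
    from u(1) obtain x where x: "x \<in> {0..h}" "u = x\<^sup>2 mod p" unfolding A_def by blast
    from u(2) obtain y where y: "y \<in> {0..h}" "u = (-1-y\<^sup>2) mod p" unfolding B_def by blast
    have xy: "x \<in> {0..h}" "y \<in> {0..h}" "x\<^sup>2 mod p = (-1-y\<^sup>2) mod p" using x y by auto
    then have "p dvd x\<^sup>2 - (-1-y\<^sup>2)" by (simp add: mod_eq_dvd_iff)
    then have "p dvd x\<^sup>2+y\<^sup>2+1" by (simp add: algebra_simps)
    moreover have "0 \<le> x" "2*x < p" "0 \<le> y" "2*y<p" using xy p2h by auto
    ultimately show False using nex by blast
  qed
  have sub: "A \<union> B \<subseteq> {0..<p}" unfolding A_def B_def using assms by auto
  have "card (A \<union> B) = card A + card B" using disj unfolding A_def B_def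
    by (intro card_Un_disjoint) auto
  moreover have "card (A \<union> B) \<le> card {0..<p}" using sub by (intro card_mono) auto
  ultimately show False using cA cB p2h assms by simp
qed

lemma small_rep:
  fixes x m :: int assumes "m > 0"
  obtains y t where "x = y + m*t" "4*y\<^sup>2 \<le> m\<^sup>2"
proof -
  define y where "y = (x + m div 2) mod m - m div 2"
  define t where "t = (x + m div 2) div m"
  have "(x + m div 2) mod m + m * ((x + m div 2) div m) = x + m div 2" by (rule mod_mult_div_eq)
  then have e: "x = y + m*t" unfolding y_def t_def by linarith
  have "0 \<le> (x + m div 2) mod m" "(x + m div 2) mod m < m" using assms by auto
  then have "- (m div 2) \<le> y" "y < m - m div 2" unfolding y_def by auto
  then have "\<bar>2*y\<bar> \<le> m" by linarith
  then have "\<bar>2*y\<bar>\<^sup>2 \<le> m\<^sup>2" by (intro power_mono) auto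
  then have "(2*y)\<^sup>2 \<le> m\<^sup>2" by simp
  then have "4*y\<^sup>2 \<le> m\<^sup>2" by (simp add: power_mult_distrib)
  with e that show ?thesis by blast
qed

lemma descent_step:
  fixes p m :: int
  assumes p: "prime p" and m: "1 < m" "m < p" and s: "sos4 (m*p)"
  shows "\<exists>r. 0 < r \<and> r < m \<and> sos4 (r*p)"
proof -
  obtain x1 x2 x3 x4 where x: "m*p = x1\<^sup>2+x2\<^sup>2+x3\<^sup>2+x4\<^sup>2" using s unfolding sos4_def by blast
  have m0: "m > 0" using m by simp
  obtain y1 t1 where 1: "x1 = y1 + m*t1" "4*y1\<^sup>2 \<le> m\<^sup>2" using small_rep[OF m0] by blast
  obtain y2 t2 where 2: "x2 = y2 + m*t2" "4*y2\<^sup>2 \<le> m\<^sup>2" using small_rep[OF m0] by blast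
  obtain y3 t3 where 3: "x3 = y3 + m*t3" "4*y3\<^sup>2 \<le> m\<^sup>2" using small_rep[OF m0] by blast
  obtain y4 t4 where 4: "x4 = y4 + m*t4" "4*y4\<^sup>2 \<le> m\<^sup>2" using small_rep[OF m0] by blast
  have nd: "\<not> m*m dvd m*p"
  proof
    assume "m*m dvd m*p"
    then have "m dvd p" using m0 by simp
    then have "m = 1 \<or> m = p" using p m0 by (simp add: prime_int_iff)
    then show False using m by simp
  qed
  define Y where "Y = y1\<^sup>2+y2\<^sup>2+y3\<^sup>2+y4\<^sup>2"
  have XY: "m*p = Y + m*(2*(y1*t1+y2*t2+y3*t3+y4*t4) + m*(t1\<^sup>2+t2\<^sup>2+t3\<^sup>2+t4\<^sup>2))"
    unfolding x Y_def 1(1) 2(1) 3(1) 4(1) by (simp add: power2_eq_square algebra_simps)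
  have "Y = m*(p - (2*(y1*t1+y2*t2+y3*t3+y4*t4) + m*(t1\<^sup>2+t2\<^sup>2+t3\<^sup>2+t4\<^sup>2)))"
    using XY by (simp add: algebra_simps)
  then have "m dvd Y" by (metis dvd_triv_left)
  then obtain r where r: "Y = m*r" by blast
  have Yle: "4*Y \<le> 4*m\<^sup>2" unfolding Y_def using 1(2) 2(2) 3(2) 4(2) by simp
  have "r \<le> m" using Yle r m0 by (simp add: power2_eq_square)
  have "Y \<ge> 0" unfolding Y_def by simp
  then have "r \<ge> 0" using r m0 by (simp add: zero_le_mult_iff)
  have "r \<noteq> 0"
  proof
    assume "r = 0"
    then have "Y = 0" using r by simp
    then have "y1 = 0" "y2 = 0" "y3 = 0" "y4 = 0" unfolding Y_def by (auto simp: add_nonneg_eq_0_iff)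
    then have "m*p = m*m*(t1\<^sup>2+t2\<^sup>2+t3\<^sup>2+t4\<^sup>2)" unfolding x 1(1) 2(1) 3(1) 4(1) by (simp add: power2_eq_square algebra_simps)
    then show False using nd by (metis dvd_triv_left)
  qed
  have "r \<noteq> m"
  proof
    assume "r = m"
    then have "Y = m\<^sup>2" using r by (simp add: power2_eq_square)
    then have e: "4*y1\<^sup>2 = m\<^sup>2" "4*y2\<^sup>2 = m\<^sup>2" "4*y3\<^sup>2 = m\<^sup>2" "4*y4\<^sup>2 = m\<^sup>2"
      using 1(2) 2(2) 3(2) 4(2) unfolding Y_def by linarith+
    have sq: "4*y\<^sup>2 = m\<^sup>2 \<Longrightarrow> m*m dvd 2*y*m*t" for y t :: int
    proof -
      assume "4*y\<^sup>2 = m\<^sup>2"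
      then have "(2*y)\<^sup>2 = m\<^sup>2" by (simp add: power_mult_distrib)
      then have "2*y = m \<or> 2*y = -m" by (rule power2_eq_iff[THEN iffD1])
      then have "m dvd 2*y" by auto
      then have "m dvd 2*y*t" by simp
      then have "m*m dvd m*(2*y*t)" by simp
      then show ?thesis by (simp add: ac_simps)
    qed
    have d: "m*m dvd 2*y1*m*t1" "m*m dvd 2*y2*m*t2" "m*m dvd 2*y3*m*t3" "m*m dvd 2*y4*m*t4"
      by (rule sq[OF e(1)], rule sq[OF e(2)], rule sq[OF e(3)], rule sq[OF e(4)])
    have "m*p = m*m + (2*y1*m*t1 + 2*y2*m*t2 + 2*y3*m*t3 + 2*y4*m*t4) + m*m*(t1\<^sup>2+t2\<^sup>2+t3\<^sup>2+t4\<^sup>2)"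
      using XY \<open>Y = m\<^sup>2\<close> by (simp add: power2_eq_square algebra_simps)
    moreover have "m*m dvd m*m + (2*y1*m*t1 + 2*y2*m*t2 + 2*y3*m*t3 + 2*y4*m*t4) + m*m*(t1\<^sup>2+t2\<^sup>2+t3\<^sup>2+t4\<^sup>2)"
      using d by (intro dvd_add) auto
    ultimately show False using nd by simp
  qed
  have rm: "0 < r" "r < m" using \<open>r \<le> m\<close> \<open>r \<ge> 0\<close> \<open>r \<noteq> 0\<close> \<open>r \<noteq> m\<close> by auto
  define w1 where "w1 = p - (x1*t1+x2*t2+x3*t3+x4*t4)"
  define w2 where "w2 = x1*t2 - x2*t1 + x3*t4 - x4*t3"
  define w3 where "w3 = x1*t3 - x3*t1 + x4*t2 - x2*t4"
  define w4 where "w4 = x1*t4 - x4*t1 + x2*t3 - x3*t2"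
  have y1: "y1 = x1 - m*t1" and y2: "y2 = x2 - m*t2" and y3: "y3 = x3 - m*t3" and y4: "y4 = x4 - m*t4"
    using 1(1) 2(1) 3(1) 4(1) by auto
  have "(m*p)*(m*r) = (m*w1)\<^sup>2 + (m*w2)\<^sup>2 + (m*w3)\<^sup>2 + (m*w4)\<^sup>2"
  proof -
    have "(m*p)*(m*r) = (x1*y1+x2*y2+x3*y3+x4*y4)\<^sup>2 + (x1*y2-x2*y1+x3*y4-x4*y3)\<^sup>2
 + (x1*y3-x3*y1+x4*y2-x2*y4)\<^sup>2 + (x1*y4-x4*y1+x2*y3-x3*y2)\<^sup>2"
      unfolding x r[symmetric] Y_def by (rule euler4)
    moreover have "x1*y1+x2*y2+x3*y3+x4*y4 = m * w1"
      unfolding w1_def y1 y2 y3 y4 using x by (simp add: power2_eq_square algebra_simps)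
    moreover have "x1*y2-x2*y1+x3*y4-x4*y3 = - (m*w2)" unfolding w2_def y1 y2 y3 y4 by (simp add: algebra_simps)
    moreover have "x1*y3-x3*y1+x4*y2-x2*y4 = - (m*w3)" unfolding w3_def y1 y2 y3 y4 by (simp add: algebra_simps)
    moreover have "x1*y4-x4*y1+x2*y3-x3*y2 = - (m*w4)" unfolding w4_def y1 y2 y3 y4 by (simp add: algebra_simps)
    ultimately show ?thesis by (simp add: power2_minus)
  qed
  then have "(m*m)*(p*r) = (m*m)*(w1\<^sup>2+w2\<^sup>2+w3\<^sup>2+w4\<^sup>2)" by (simp add: power2_eq_square algebra_simps)
  then have "p*r = w1\<^sup>2+w2\<^sup>2+w3\<^sup>2+w4\<^sup>2" using m0 by simp
  then have "sos4 (r*p)" unfolding sos4_def by (metis mult.commute)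
  then show ?thesis using rm by blast
qed


lemma sos4_prime_aux:
  fixes p :: int assumes p: "prime p"
  shows "0 < n \<Longrightarrow> int n < p \<Longrightarrow> sos4 (int n * p) \<Longrightarrow> sos4 p"
proof (induction n rule: less_induct)
  case (less n)
  show ?case
  proof (cases "n = 1")
    case True then show ?thesis using less.prems by simp
  next
    case False
    then have "1 < int n" using less.prems by simp
    then obtain r where r: "0 < r" "r < int n" "sos4 (r*p)"
      using descent_step[OF p _ less.prems(2) less.prems(3)] by blast
    have "nat r < n" "0 < nat r" "int (nat r) < p" using r less.prems by auto
    moreover have "sos4 (int (nat r) * p)" using r by simp
    ultimately show ?thesis using less.IH by blast
  qed
qed

lemma sos4_prime: fixes p :: int assumes p: "prime p" shows "sos4 p"
proof (cases "p = 2")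
  case True
  have "p = 1\<^sup>2 + 1\<^sup>2 + 0\<^sup>2 + 0\<^sup>2" using True by simp
  then show ?thesis unfolding sos4_def by blast
next
  case False
  have "p \<ge> 2" using p by (rule prime_ge_2_int)
  then have p2: "p > 2" using False by simp
  obtain x y where xy: "0 \<le> x" "2*x < p" "0 \<le> y" "2*y < p" "p dvd x\<^sup>2+y\<^sup>2+1"
    using prime_mod[OF p p2] by blast
  obtain m where m: "x\<^sup>2+y\<^sup>2+1 = p*m" using xy(5) by blast
  have "4*(x\<^sup>2+y\<^sup>2+1) < 4*p\<^sup>2"
  proof -
    have "(2*x)\<^sup>2 \<le> (p - 1)\<^sup>2" using xy by (intro power_mono) auto
    moreover have "(2*y)\<^sup>2 \<le> (p - 1)\<^sup>2" using xy by (intro power_mono) auto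
    ultimately have "4*x\<^sup>2 + 4*y\<^sup>2 \<le> 2*(p-1)\<^sup>2" by (simp add: power_mult_distrib)
    moreover have "2*(p-1)\<^sup>2 + 4 < 4*p\<^sup>2"
    proof -
      have pp: "0 < p*p" using p2 by simp
      have "2*(p-1)\<^sup>2 + 4 = 2*(p*p) - 4*p + 6" by (simp add: power2_eq_square algebra_simps)
      moreover have "4*p\<^sup>2 = 4*(p*p)" by (simp add: power2_eq_square)
      ultimately show ?thesis using pp p2 by linarith
    qed
    moreover have "4*(x\<^sup>2+y\<^sup>2+1) = 4*x\<^sup>2 + 4*y\<^sup>2 + 4" by simp
    ultimately show ?thesis by linarith
  qed
  then have "p*m < p*p" using m by (simp add: power2_eq_square)
  then have "m < p" using p2 by simp
  have "0 \<le> x\<^sup>2" "0 \<le> y\<^sup>2" by simp_all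
  then have "0 < p*m" using m by linarith
  then have "m > 0" using p2 by (simp add: zero_less_mult_iff)
  have "m*p = x\<^sup>2+y\<^sup>2+1\<^sup>2+0\<^sup>2" using m by (simp add: mult.commute)
  then have "sos4 (m*p)" unfolding sos4_def by blast
  then show ?thesis using sos4_prime_aux[OF p, of "nat m"] \<open>m > 0\<close> \<open>m < p\<close> by simp
qed

lemma sos4_nat: "sos4 (int n)"
proof (induction n rule: less_induct)
  case (less n)
  show ?case
  proof (cases "n \<le> 1")
    case True
    then have "int n = (int n)\<^sup>2 + 0\<^sup>2 + 0\<^sup>2 + 0\<^sup>2" by (cases n) auto
    then show ?thesis unfolding sos4_def by blast
  next
    case False
    then obtain p where p: "prime p" "p dvd n" using prime_factor_nat[of n] by auto
    then obtain q where q: "n = p*q" by blast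
    have "q < n" using p q False prime_gt_1_nat[OF p(1)] by (cases "q = 0") auto
    then have "sos4 (int q)" using less.IH by blast
    moreover have "sos4 (int p)" using sos4_prime p(1) by (simp add: prime_nat_iff_prime)
    ultimately show ?thesis using q sos4_mult by (metis of_nat_mult)
  qed
qed

lemma sq_sum_le: "(x + y)\<^sup>2 \<le> 2*x\<^sup>2 + 2*(y::real)\<^sup>2"
proof -
  have "0 \<le> (x - y)\<^sup>2" by simp
  then show ?thesis by (simp add: power2_eq_square algebra_simps)
qed

lemma sq_sum3_le: "(x + y + z)\<^sup>2 \<le> 3*x\<^sup>2 + 3*y\<^sup>2 + 3*(z::real)\<^sup>2"
proof -
  have "0 \<le> (x - y)\<^sup>2 + (y - z)\<^sup>2 + (x - z)\<^sup>2" by simp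
  then show ?thesis by (simp add: power2_eq_square algebra_simps)
qed

lemma outer_pt:
  fixes a b c d :: complex
  shows "cmod (a * cnj b - c * cnj d) \<le> cmod (a - c) * cmod b + cmod c * cmod (b - d)"
proof -
  have "a * cnj b - c * cnj d = (a - c) * cnj b + c * cnj (b - d)" by (simp add: algebra_simps)
  then have "cmod (a * cnj b - c * cnj d) \<le> cmod ((a - c) * cnj b) + cmod (c * cnj (b - d))"
    by (metis norm_triangle_ineq)
  moreover have "cmod (cnj (b - d)) = cmod (b - d)" by (rule complex_mod_cnj)
  ultimately show ?thesis by (simp add: norm_mult)
qed

lemma outer_bound:
  fixes f g :: "nat \<Rightarrow> complex"
  assumes f: "(\<Sum>i<d. (cmod (f i))\<^sup>2) = 1" and g: "(\<Sum>i<d. (cmod (g i))\<^sup>2) = 1"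
  shows "(\<Sum>i<d. \<Sum>j<d. (cmod (f i * cnj (f j) - g i * cnj (g j)))\<^sup>2)
         \<le> 4 * (\<Sum>i<d. (cmod (f i - g i))\<^sup>2)"
proof -
  define a where "a i = cmod (f i - g i)" for i
  have pt: "(cmod (f i * cnj (f j) - g i * cnj (g j)))\<^sup>2
      \<le> 2 * ((a i)\<^sup>2 * (cmod (f j))\<^sup>2) + 2 * ((cmod (g i))\<^sup>2 * (a j)\<^sup>2)" for i j
  proof -
    have "cmod (f i * cnj (f j) - g i * cnj (g j)) \<le> a i * cmod (f j) + cmod (g i) * a j"
      unfolding a_def by (rule outer_pt)
    then have "(cmod (f i * cnj (f j) - g i * cnj (g j)))\<^sup>2 \<le> (a i * cmod (f j) + cmod (g i) * a j)\<^sup>2"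
      by (intro power_mono) auto
    also have "\<dots> \<le> 2 * (a i * cmod (f j))\<^sup>2 + 2 * (cmod (g i) * a j)\<^sup>2" by (rule sq_sum_le)
    finally show ?thesis by (simp add: power_mult_distrib)
  qed
  have "(\<Sum>i<d. \<Sum>j<d. (cmod (f i * cnj (f j) - g i * cnj (g j)))\<^sup>2)
     \<le> (\<Sum>i<d. \<Sum>j<d. 2 * ((a i)\<^sup>2 * (cmod (f j))\<^sup>2) + 2 * ((cmod (g i))\<^sup>2 * (a j)\<^sup>2))"
    by (intro sum_mono pt)
  also have "\<dots> = 2 * ((\<Sum>i<d. (a i)\<^sup>2) * (\<Sum>j<d. (cmod (f j))\<^sup>2))
                 + 2 * ((\<Sum>i<d. (cmod (g i))\<^sup>2) * (\<Sum>j<d. (a j)\<^sup>2))"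
  proof -
    have s1: "(\<Sum>i<d. \<Sum>j<d. 2 * ((a i)\<^sup>2 * (cmod (f j))\<^sup>2)) = 2 * ((\<Sum>i<d. (a i)\<^sup>2) * (\<Sum>j<d. (cmod (f j))\<^sup>2))"
      unfolding sum_product by (simp add: sum_distrib_left)
    have s2: "(\<Sum>i<d. \<Sum>j<d. 2 * ((cmod (g i))\<^sup>2 * (a j)\<^sup>2)) = 2 * ((\<Sum>i<d. (cmod (g i))\<^sup>2) * (\<Sum>j<d. (a j)\<^sup>2))"
      unfolding sum_product by (simp add: sum_distrib_left)
    show ?thesis by (simp only: sum.distrib s1 s2)
  qed
  also have "\<dots> = 4 * (\<Sum>i<d. (a i)\<^sup>2)" using f g by simp
  finally show ?thesis unfolding a_def .
qed

lemma refl_dims[simp]: "dim_row (refl_op v) = dim_vec v" "dim_col (refl_op v) = dim_vec v"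
  unfolding refl_op_def outer_prod_def by simp_all

lemma refl_entry:
  "i < dim_vec v \<Longrightarrow> j < dim_vec v \<Longrightarrow>
   refl_op v $$ (i,j) = (if i = j then 1 else 0) - 2 * (v $ i * cnj (v $ j))"
  unfolding refl_op_def outer_prod_def by simp

lemma unit_sum: "unit_cvec v \<Longrightarrow> (\<Sum>i<dim_vec v. (cmod (v $ i))\<^sup>2) = 1"
  unfolding unit_cvec_def by simp

lemma refl_dist:
  assumes "dim_vec \<phi> = d" "dim_vec \<psi> = d" "unit_cvec \<phi>" "unit_cvec \<psi>"
  shows "frobenius_norm (refl_op \<phi> - refl_op \<psi>) \<le> 4 * sqrt (\<Sum>i<d. (cmod (\<phi> $ i - \<psi> $ i))\<^sup>2)"
proof -
  have e: "(cmod ((refl_op \<phi> - refl_op \<psi>) $$ (i,j)))\<^sup>2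
      = 4 * (cmod (\<phi> $ i * cnj (\<phi> $ j) - \<psi> $ i * cnj (\<psi> $ j)))\<^sup>2" if "i < d" "j < d" for i j
  proof -
    have "(refl_op \<phi> - refl_op \<psi>) $$ (i,j) = 2 * (\<psi> $ i * cnj (\<psi> $ j) - \<phi> $ i * cnj (\<phi> $ j))"
      using that assms by (simp add: refl_entry algebra_simps del: distrib_left_numeral right_diff_distrib_numeral)
    moreover have "cmod (\<psi> $ i * cnj (\<psi> $ j) - \<phi> $ i * cnj (\<phi> $ j)) = cmod (\<phi> $ i * cnj (\<phi> $ j) - \<psi> $ i * cnj (\<psi> $ j))"
      by (rule norm_minus_commute)
    ultimately show ?thesis by (simp add: norm_mult power_mult_distrib del: distrib_left_numeral right_diff_distrib_numeral)
  qed
  have "(\<Sum>i<d. \<Sum>j<d. (cmod ((refl_op \<phi> - refl_op \<psi>) $$ (i,j)))\<^sup>2)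
      = 4 * (\<Sum>i<d. \<Sum>j<d. (cmod (\<phi> $ i * cnj (\<phi> $ j) - \<psi> $ i * cnj (\<psi> $ j)))\<^sup>2)"
    by (simp add: e sum_distrib_left)
  also have "\<dots> \<le> 4 * (4 * (\<Sum>i<d. (cmod (\<phi> $ i - \<psi> $ i))\<^sup>2))"
    using outer_bound[of "\<lambda>i. \<phi> $ i" d "\<lambda>i. \<psi> $ i"] unit_sum[OF assms(3)] unit_sum[OF assms(4)] assms(1,2)
    by simp
  finally have le: "(\<Sum>i<d. \<Sum>j<d. (cmod ((refl_op \<phi> - refl_op \<psi>) $$ (i,j)))\<^sup>2)
      \<le> 16 * (\<Sum>i<d. (cmod (\<phi> $ i - \<psi> $ i))\<^sup>2)" by simp
  have "frobenius_norm (refl_op \<phi> - refl_op \<psi>) = sqrt (\<Sum>i<d. \<Sum>j<d. (cmod ((refl_op \<phi> - refl_op \<psi>) $$ (i,j)))\<^sup>2)"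
    unfolding frobenius_norm_def using assms by simp
  also have "\<dots> \<le> sqrt (16 * (\<Sum>i<d. (cmod (\<phi> $ i - \<psi> $ i))\<^sup>2))" using le by simp
  also have "\<dots> = 4 * sqrt (\<Sum>i<d. (cmod (\<phi> $ i - \<psi> $ i))\<^sup>2)" by (simp add: real_sqrt_mult)
  finally show ?thesis .
qed

definition ea :: "complex vec \<Rightarrow> nat \<Rightarrow> complex" where
  "ea \<psi> i = (if even i then \<psi> $ (i div 2) else 0)"
definition eb :: "complex vec \<Rightarrow> nat \<Rightarrow> complex" where
  "eb \<psi> i = (if odd i then \<psi> $ (i div 2) else 0)"

lemma sum_split2: "(\<Sum>k<2*(D::nat). (f::nat \<Rightarrow> 'a::comm_monoid_add) k) = (\<Sum>k<D. f (2*k) + f (2*k+1))"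
  by (induction D) (auto simp: lessThan_Suc ac_simps)

lemma ea_unit: "(\<Sum>k<2*D. (cmod (ea \<psi> k))\<^sup>2) = (\<Sum>k<D. (cmod (\<psi> $ k))\<^sup>2)"
  unfolding sum_split2 ea_def by simp

lemma eb_unit: "(\<Sum>k<2*D. (cmod (eb \<psi> k))\<^sup>2) = (\<Sum>k<D. (cmod (\<psi> $ k))\<^sup>2)"
  unfolding sum_split2 eb_def by simp

lemma ea_eb_orth: "(\<Sum>k<2*D. cnj (ea \<psi> k) * eb \<psi> k) = 0"
  unfolding ea_def eb_def by (intro sum.neutral) auto

lemma prod_refl_entry:
  assumes "dim_vec p = d" "dim_vec q = d" "i < d" "j < d"
  shows "(refl_op p * refl_op q) $$ (i,j) = (if i = j then 1 else 0) - 2*(p$i*cnj(p$j))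
     - 2*(q$i*cnj(q$j)) + 4*(p$i*cnj(q$j))*(\<Sum>k<d. cnj(p$k)*q$k)"
proof -
  have "(refl_op p * refl_op q) $$ (i,j) = (\<Sum>k\<in>{0..<d}. refl_op p $$ (i,k) * refl_op q $$ (k,j))"
    using assms by (simp add: scalar_prod_def)
  also have "\<dots> = (\<Sum>k<d. (if k = i then (if i = j then 1 else 0) - 2*(q$k*cnj(q$j)) else 0)
        - (if k = j then 2*(p$i*cnj(p$k)) else 0) + 4*(p$i*cnj(q$j))*(cnj(p$k)*q$k))"
    unfolding atLeast0LessThan
    by (rule sum.cong) (auto simp: refl_entry assms algebra_simps)
  also have "\<dots> = (if i = j then 1 else 0) - 2*(q$i*cnj(q$j)) - 2*(p$i*cnj(p$j))
       + 4*(p$i*cnj(q$j))*(\<Sum>k<d. cnj(p$k)*q$k)"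
    using assms by (simp add: sum.distrib sum_subtractf sum_distrib_left)
  finally show ?thesis by (simp add: algebra_simps)
qed

lemma kron_dims[simp]: "dim_row (kron_id2 A) = 2 * dim_row A" "dim_col (kron_id2 A) = 2 * dim_col A"
  unfolding kron_id2_def by simp_all

lemma kron_entry:
  assumes "dim_vec \<psi> = D" "i < 2*D" "j < 2*D"
  shows "kron_id2 (refl_op \<psi>) $$ (i,j) = (if i = j then 1 else 0)
     - 2*(ea \<psi> i * cnj (ea \<psi> j)) - 2*(eb \<psi> i * cnj (eb \<psi> j))"
proof -
  have ij: "i div 2 < D" "j div 2 < D" using assms by auto
  have eq: "i = j \<longleftrightarrow> (i mod 2 = j mod 2 \<and> i div 2 = j div 2)"
    by (metis div_mult_mod_eq)
  have "kron_id2 (refl_op \<psi>) $$ (i,j) = (if i mod 2 = j mod 2 then refl_op \<psi> $$ (i div 2, j div 2) else 0)"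
    unfolding kron_id2_def using assms by simp
  also have "\<dots> = (if i = j then 1 else 0)
     - 2*(ea \<psi> i * cnj (ea \<psi> j)) - 2*(eb \<psi> i * cnj (eb \<psi> j))"
    using ij assms(1) unfolding ea_def eb_def eq
    by (auto simp: refl_entry mod2_eq_if split: if_splits)
  finally show ?thesis .
qed

lemma cs_sum:
  fixes f g :: "nat \<Rightarrow> real"
  shows "(\<Sum>k<d. \<bar>f k\<bar> * \<bar>g k\<bar>) \<le> sqrt (\<Sum>k<d. (f k)\<^sup>2) * sqrt (\<Sum>k<d. (g k)\<^sup>2)"
  using L2_set_mult_ineq[of f g "{..<d}"] unfolding L2_set_def .

lemma c_bound:
  fixes p q a b :: "nat \<Rightarrow> complex"
  assumes q: "(\<Sum>k<d. (cmod (q k))\<^sup>2) = 1" and a: "(\<Sum>k<d. (cmod (a k))\<^sup>2) = 1"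
    and o: "(\<Sum>k<d. cnj (a k) * b k) = 0"
  shows "cmod (\<Sum>k<d. cnj (p k) * q k) \<le> sqrt (\<Sum>k<d. (cmod (p k - a k))\<^sup>2) + sqrt (\<Sum>k<d. (cmod (q k - b k))\<^sup>2)"
proof -
  have "(\<Sum>k<d. cnj (p k) * q k) = (\<Sum>k<d. cnj (p k - a k) * q k + cnj (a k) * (q k - b k)) + (\<Sum>k<d. cnj (a k) * b k)"
    by (simp add: sum.distrib[symmetric] algebra_simps)
  then have e: "(\<Sum>k<d. cnj (p k) * q k) = (\<Sum>k<d. cnj (p k - a k) * q k + cnj (a k) * (q k - b k))"
    using o by simp
  have "cmod (\<Sum>k<d. cnj (p k) * q k) \<le> (\<Sum>k<d. cmod (cnj (p k - a k) * q k + cnj (a k) * (q k - b k)))"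
    unfolding e by (rule norm_sum)
  also have "\<dots> \<le> (\<Sum>k<d. \<bar>cmod (p k - a k)\<bar> * \<bar>cmod (q k)\<bar> + \<bar>cmod (a k)\<bar> * \<bar>cmod (q k - b k)\<bar>)"
  proof (rule sum_mono)
    fix k
    have "cmod (cnj (p k - a k) * q k + cnj (a k) * (q k - b k)) \<le> cmod (cnj (p k - a k) * q k) + cmod (cnj (a k) * (q k - b k))"
      by (rule norm_triangle_ineq)
    then show "cmod (cnj (p k - a k) * q k + cnj (a k) * (q k - b k)) \<le> \<bar>cmod (p k - a k)\<bar> * \<bar>cmod (q k)\<bar> + \<bar>cmod (a k)\<bar> * \<bar>cmod (q k - b k)\<bar>"
      by (simp add: norm_mult del: complex_cnj_diff)
  qed
  also have "\<dots> = (\<Sum>k<d. \<bar>cmod (p k - a k)\<bar> * \<bar>cmod (q k)\<bar>) + (\<Sum>k<d. \<bar>cmod (a k)\<bar> * \<bar>cmod (q k - b k)\<bar>)"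
    by (rule sum.distrib)
  also have "\<dots> \<le> sqrt (\<Sum>k<d. (cmod (p k - a k))\<^sup>2) * sqrt (\<Sum>k<d. (cmod (q k))\<^sup>2)
      + sqrt (\<Sum>k<d. (cmod (a k))\<^sup>2) * sqrt (\<Sum>k<d. (cmod (q k - b k))\<^sup>2)"
    by (intro add_mono cs_sum)
  finally show ?thesis using q a by simp
qed

lemma prod_bound:
  assumes dp: "dim_vec p = 2*D" and dq: "dim_vec q = 2*D" and d\<psi>: "dim_vec \<psi> = D"
    and up: "unit_cvec p" and uq: "unit_cvec q" and u\<psi>: "unit_cvec \<psi>"
    and S1: "(\<Sum>k<2*D. (cmod (p $ k - ea \<psi> k))\<^sup>2) \<le> \<delta>\<^sup>2"
    and S2: "(\<Sum>k<2*D. (cmod (q $ k - eb \<psi> k))\<^sup>2) \<le> \<delta>\<^sup>2"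
    and \<delta>: "0 \<le> \<delta>"
  shows "frobenius_norm (refl_op p * refl_op q - kron_id2 (refl_op \<psi>)) \<le> 17 * \<delta>"
proof -
  define d where "d = 2*D"
  define c where "c = (\<Sum>k<d. cnj (p$k) * q$k)"
  have pu: "(\<Sum>k<d. (cmod (p $ k))\<^sup>2) = 1" using unit_sum[OF up] dp d_def by simp
  have qu: "(\<Sum>k<d. (cmod (q $ k))\<^sup>2) = 1" using unit_sum[OF uq] dq d_def by simp
  have au: "(\<Sum>k<d. (cmod (ea \<psi> k))\<^sup>2) = 1" unfolding d_def ea_unit using unit_sum[OF u\<psi>] d\<psi> by simp
  have bu: "(\<Sum>k<d. (cmod (eb \<psi> k))\<^sup>2) = 1" unfolding d_def eb_unit using unit_sum[OF u\<psi>] d\<psi> by simp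
  have sS1: "sqrt (\<Sum>k<d. (cmod (p $ k - ea \<psi> k))\<^sup>2) \<le> \<delta>"
    using S1 \<delta> unfolding d_def by (simp add: real_sqrt_le_iff real_le_lsqrt)
  have sS2: "sqrt (\<Sum>k<d. (cmod (q $ k - eb \<psi> k))\<^sup>2) \<le> \<delta>"
    using S2 \<delta> unfolding d_def by (simp add: real_le_lsqrt)
  have cb: "cmod c \<le> 2*\<delta>"
    using c_bound[where p="\<lambda>k. p$k" and q="\<lambda>k. q$k" and a="ea \<psi>" and b="eb \<psi>" and d=d] qu au ea_eb_orth[of \<psi> D] sS1 sS2
    unfolding c_def d_def by simp
  have cb2: "(cmod c)\<^sup>2 \<le> 4*\<delta>\<^sup>2"
  proof -
    have "(cmod c)\<^sup>2 \<le> (2*\<delta>)\<^sup>2" using cb by (intro power_mono) auto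
    then show ?thesis by (simp add: power_mult_distrib)
  qed
  define X where "X i j = ea \<psi> i * cnj (ea \<psi> j) - p$i * cnj (p$j)" for i j
  define Y where "Y i j = eb \<psi> i * cnj (eb \<psi> j) - q$i * cnj (q$j)" for i j
  have entry: "(refl_op p * refl_op q - kron_id2 (refl_op \<psi>)) $$ (i,j)
      = 2 * X i j + 2 * Y i j + 4 * (p$i * cnj (q$j)) * c" if "i < d" "j < d" for i j
  proof -
    have ij: "i < 2*D" "j < 2*D" using that d_def by auto
    have "(refl_op p * refl_op q - kron_id2 (refl_op \<psi>)) $$ (i,j)
       = (refl_op p * refl_op q) $$ (i,j) - kron_id2 (refl_op \<psi>) $$ (i,j)"
      using ij d\<psi> by simp
    also have "\<dots> = ((if i = j then 1 else 0) - 2*(p$i*cnj(p$j))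
     - 2*(q$i*cnj(q$j)) + 4*(p$i*cnj(q$j))*(\<Sum>k<2*D. cnj(p$k)*q$k))
      - ((if i = j then 1 else 0) - 2*(ea \<psi> i * cnj (ea \<psi> j)) - 2*(eb \<psi> i * cnj (eb \<psi> j)))"
      by (simp only: prod_refl_entry[OF dp dq ij] kron_entry[OF d\<psi> ij])
    also have "\<dots> = 2 * X i j + 2 * Y i j + 4 * (p$i * cnj (q$j)) * c"
      unfolding X_def Y_def c_def d_def by (simp add: algebra_simps)
    finally show ?thesis .
  qed
  have pt: "(cmod ((refl_op p * refl_op q - kron_id2 (refl_op \<psi>)) $$ (i,j)))\<^sup>2
      \<le> 12 * (cmod (X i j))\<^sup>2 + 12 * (cmod (Y i j))\<^sup>2 + 48 * (cmod c)\<^sup>2 * ((cmod (p$i))\<^sup>2 * (cmod (q$j))\<^sup>2)"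
    if "i < d" "j < d" for i j
  proof -
    have "cmod (2 * X i j + 2 * Y i j + 4 * (p$i * cnj (q$j)) * c)
        \<le> 2 * cmod (X i j) + 2 * cmod (Y i j) + 4 * (cmod (p$i) * cmod (q$j) * cmod c)"
    proof -
      have "cmod (2 * X i j + 2 * Y i j + 4 * (p$i * cnj (q$j)) * c)
          \<le> cmod (2 * X i j + 2 * Y i j) + cmod (4 * (p$i * cnj (q$j)) * c)" by (rule norm_triangle_ineq)
      also have "\<dots> \<le> cmod (2 * X i j) + cmod (2 * Y i j) + cmod (4 * (p$i * cnj (q$j)) * c)"
        using norm_triangle_ineq[of "2 * X i j" "2 * Y i j"] by linarith
      finally show ?thesis by (simp add: norm_mult)
    qed
    then have "(cmod (2 * X i j + 2 * Y i j + 4 * (p$i * cnj (q$j)) * c))\<^sup>2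
        \<le> (2 * cmod (X i j) + 2 * cmod (Y i j) + 4 * (cmod (p$i) * cmod (q$j) * cmod c))\<^sup>2"
      by (intro power_mono) auto
    also have "\<dots> \<le> 3 * (2 * cmod (X i j))\<^sup>2 + 3 * (2 * cmod (Y i j))\<^sup>2 + 3 * (4 * (cmod (p$i) * cmod (q$j) * cmod c))\<^sup>2"
      by (rule sq_sum3_le)
    also have "\<dots> = 12 * (cmod (X i j))\<^sup>2 + 12 * (cmod (Y i j))\<^sup>2 + 48 * (cmod c)\<^sup>2 * ((cmod (p$i))\<^sup>2 * (cmod (q$j))\<^sup>2)"
      by (simp add: power_mult_distrib)
    finally show ?thesis using entry[OF that] by simp
  qed
  have sX: "(\<Sum>i<d. \<Sum>j<d. (cmod (X i j))\<^sup>2) \<le> 4 * \<delta>\<^sup>2"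
  proof -
    have "(\<Sum>i<d. \<Sum>j<d. (cmod (X i j))\<^sup>2) \<le> 4 * (\<Sum>i<d. (cmod (ea \<psi> i - p $ i))\<^sup>2)"
      unfolding X_def by (rule outer_bound[OF au pu])
    also have "\<dots> = 4 * (\<Sum>i<d. (cmod (p $ i - ea \<psi> i))\<^sup>2)" by (simp add: norm_minus_commute)
    finally show ?thesis using S1 unfolding d_def by simp
  qed
  have sY: "(\<Sum>i<d. \<Sum>j<d. (cmod (Y i j))\<^sup>2) \<le> 4 * \<delta>\<^sup>2"
  proof -
    have "(\<Sum>i<d. \<Sum>j<d. (cmod (Y i j))\<^sup>2) \<le> 4 * (\<Sum>i<d. (cmod (eb \<psi> i - q $ i))\<^sup>2)"
      unfolding Y_def by (rule outer_bound[OF bu qu])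
    also have "\<dots> = 4 * (\<Sum>i<d. (cmod (q $ i - eb \<psi> i))\<^sup>2)" by (simp add: norm_minus_commute)
    finally show ?thesis using S2 unfolding d_def by simp
  qed
  have sPQ: "(\<Sum>i<d. \<Sum>j<d. (cmod (p$i))\<^sup>2 * (cmod (q$j))\<^sup>2) = 1"
    using pu qu unfolding sum_product[symmetric] by simp
  let ?M = "refl_op p * refl_op q - kron_id2 (refl_op \<psi>)"
  have "(\<Sum>i<d. \<Sum>j<d. (cmod (?M $$ (i,j)))\<^sup>2)
      \<le> (\<Sum>i<d. \<Sum>j<d. 12 * (cmod (X i j))\<^sup>2 + 12 * (cmod (Y i j))\<^sup>2 + 48 * (cmod c)\<^sup>2 * ((cmod (p$i))\<^sup>2 * (cmod (q$j))\<^sup>2))"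
    by (intro sum_mono pt) auto
  also have "\<dots> = 12 * (\<Sum>i<d. \<Sum>j<d. (cmod (X i j))\<^sup>2) + 12 * (\<Sum>i<d. \<Sum>j<d. (cmod (Y i j))\<^sup>2)
      + 48 * (cmod c)\<^sup>2 * (\<Sum>i<d. \<Sum>j<d. (cmod (p$i))\<^sup>2 * (cmod (q$j))\<^sup>2)"
    by (simp add: sum.distrib sum_distrib_left)
  also have "\<dots> \<le> 12 * (4*\<delta>\<^sup>2) + 12 * (4*\<delta>\<^sup>2) + 48 * (4*\<delta>\<^sup>2) * 1"
    unfolding sPQ using sX sY cb2 by (intro add_mono mult_left_mono mult_right_mono) auto
  also have "\<dots> \<le> (17*\<delta>)\<^sup>2" by (simp add: power_mult_distrib)
  finally have le: "(\<Sum>i<d. \<Sum>j<d. (cmod (?M $$ (i,j)))\<^sup>2) \<le> (17*\<delta>)\<^sup>2" .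
  have "frobenius_norm ?M = sqrt (\<Sum>i<d. \<Sum>j<d. (cmod (?M $$ (i,j)))\<^sup>2)"
    unfolding frobenius_norm_def using d\<psi> d_def by simp
  also have "\<dots> \<le> sqrt ((17*\<delta>)\<^sup>2)" using le by simp
  also have "\<dots> = 17*\<delta>" by (simp only: real_sqrt_abs) (simp add: \<delta>)
  finally show ?thesis .
qed

definition tr :: "real \<Rightarrow> int" where "tr x = (if x \<ge> 0 then \<lfloor>x\<rfloor> else \<lceil>x\<rceil>)"

lemma tr_abs: "\<bar>real_of_int (tr x)\<bar> \<le> \<bar>x\<bar>"
proof (cases "x \<ge> 0")
  case True
  have "real_of_int \<lfloor>x\<rfloor> \<le> x" "0 \<le> \<lfloor>x\<rfloor>" using floor_correct[of x] True by auto
  then show ?thesis using True unfolding tr_def by simp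
next
  case False
  have "x \<le> real_of_int \<lceil>x\<rceil>" "\<lceil>x\<rceil> \<le> 0" using ceiling_correct[of x] False by auto
  then show ?thesis using False unfolding tr_def by simp
qed

lemma tr_err: "\<bar>x - real_of_int (tr x)\<bar> \<le> 1"
  using of_int_floor_le[of x] real_of_int_floor_add_one_ge[of x] le_of_int_ceiling[of x]
    of_int_ceiling_le_add_one[of x]
  unfolding tr_def by (cases "x \<ge> 0") (simp_all add: abs_le_iff, linarith+)

lemma tr_sq: "x\<^sup>2 - (real_of_int (tr x))\<^sup>2 \<le> 2 * \<bar>x\<bar> * \<bar>x - real_of_int (tr x)\<bar>"
proof -
  define y where "y = real_of_int (tr x)"
  have "\<bar>y\<bar> \<le> \<bar>x\<bar>" unfolding y_def by (rule tr_abs)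
  have "x\<^sup>2 - y\<^sup>2 = (x - y) * (x + y)" by (simp add: power2_eq_square algebra_simps)
  also have "\<dots> \<le> \<bar>x - y\<bar> * \<bar>x + y\<bar>" by (metis abs_ge_self abs_mult)
  also have "\<dots> \<le> \<bar>x - y\<bar> * (2 * \<bar>x\<bar>)"
    using \<open>\<bar>y\<bar> \<le> \<bar>x\<bar>\<close> by (intro mult_left_mono) auto
  finally show ?thesis unfolding y_def by (simp add: algebra_simps)
qed

lemma tr_sq_le: "(real_of_int (tr x))\<^sup>2 \<le> x\<^sup>2"
  using tr_abs[of x] by (metis abs_ge_zero power2_abs power_mono)

lemma scaled_err:
  assumes "s > 0"
  shows "\<bar>r - real_of_int (tr (s * r)) / s\<bar> \<le> 1 / s"
proof -
  have "\<bar>s * r - real_of_int (tr (s * r))\<bar> \<le> 1" by (rule tr_err)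
  moreover have "r - real_of_int (tr (s * r)) / s = (s * r - real_of_int (tr (s * r))) / s"
    using assms by (simp add: field_simps)
  ultimately show ?thesis using assms by (simp add: abs_div divide_right_mono)
qed

lemma scaled_sq:
  assumes "s > 0"
  shows "r\<^sup>2 - (real_of_int (tr (s * r)) / s)\<^sup>2 \<le> 2 * \<bar>r\<bar> / s"
proof -
  have h: "(s*r)\<^sup>2 - (real_of_int (tr (s * r)))\<^sup>2 \<le> 2 * \<bar>s*r\<bar> * 1"
  proof -
    have "2 * \<bar>s*r\<bar> * \<bar>s*r - real_of_int (tr (s * r))\<bar> \<le> 2 * \<bar>s*r\<bar> * 1"
      using tr_err[of "s*r"] by (intro mult_left_mono) auto
    then show ?thesis using tr_sq[of "s*r"] by linarith
  qed
  have "r\<^sup>2 - (real_of_int (tr (s * r)) / s)\<^sup>2 = ((s*r)\<^sup>2 - (real_of_int (tr (s * r)))\<^sup>2) / s\<^sup>2"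
    using assms by (simp add: field_simps power2_eq_square)
  also have "\<dots> \<le> (2 * \<bar>s*r\<bar>) / s\<^sup>2" using h assms by (intro divide_right_mono) auto
  also have "\<dots> = 2 * \<bar>r\<bar> / s" using assms by (simp add: abs_mult power2_eq_square field_simps)
  finally show ?thesis .
qed

lemma abs_re_im: "\<bar>Re z\<bar> + \<bar>Im z\<bar> \<le> sqrt 2 * cmod z"
proof -
  have "(\<bar>Re z\<bar> + \<bar>Im z\<bar>)\<^sup>2 \<le> 2 * (Re z)\<^sup>2 + 2 * (Im z)\<^sup>2"
    using sq_sum_le[of "\<bar>Re z\<bar>" "\<bar>Im z\<bar>"] by simp
  also have "\<dots> = (sqrt 2 * cmod z)\<^sup>2" by (simp add: power_mult_distrib cmod_power2)
  finally show ?thesis by (rule power2_le_imp_le) auto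
qed

lemma complex_ring_form:
  "Complex (real_of_int x / 2^m) (real_of_int y / 2^m) =
   (of_int x + of_int 0 * of_real (sqrt 2) + of_int y * \<i> + of_int 0 * \<i> * of_real (sqrt 2)) / 2 ^ m"
  by (simp add: complex_eq_iff)

lemma scaled_sq_le:
  assumes "s > 0" shows "(real_of_int (tr (s * r)) / s)\<^sup>2 \<le> r\<^sup>2"
proof -
  have "(real_of_int (tr (s * r)))\<^sup>2 \<le> (s*r)\<^sup>2" by (rule tr_sq_le)
  then have "(real_of_int (tr (s * r)))\<^sup>2 / s\<^sup>2 \<le> (s*r)\<^sup>2 / s\<^sup>2" using assms by (intro divide_right_mono) auto
  then show ?thesis using assms by (simp add: power_divide power_mult_distrib)
qed

lemma scaled_err_sq:
  assumes "s > 0" shows "(real_of_int (tr (s * r)) / s - r)\<^sup>2 \<le> 1 / s\<^sup>2"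
proof -
  have "\<bar>r - real_of_int (tr (s * r)) / s\<bar> \<le> 1 / s" by (rule scaled_err[OF assms])
  then have "\<bar>r - real_of_int (tr (s * r)) / s\<bar>\<^sup>2 \<le> (1 / s)\<^sup>2" by (intro power_mono) auto
  then show ?thesis by (simp add: power2_commute power_divide)
qed

lemma core:
  fixes \<psi> :: "nat \<Rightarrow> complex" and D m j k :: nat
  assumes u: "(\<Sum>i<D. (cmod (\<psi> i))\<^sup>2) = 1" and jk: "j < D" "k < D" "j \<noteq> k"
    and z: "\<psi> j = 0" "\<psi> k = 0" and t1: "sqrt (2*D) / 2^m \<le> 1"
  shows "\<exists>\<phi>. (\<Sum>i<D. (cmod (\<phi> i))\<^sup>2) = 1 \<and> (\<forall>i<D. ring_coord m (\<phi> i))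
     \<and> (\<Sum>i<D. (cmod (\<phi> i - \<psi> i))\<^sup>2) \<le> 3 * (sqrt (2*D) / 2^m)"
proof -
  define s :: real where "s = 2^m"
  have s0: "s > 0" unfolding s_def by simp
  have "(2::real)^m * 2^m = (2*2)^m" by (rule power_mult_distrib[symmetric])
  then have ss: "s\<^sup>2 = real_of_int (4^m)" unfolding s_def by (simp add: power2_eq_square)
  define A where "A i = tr (s * Re (\<psi> i))" for i
  define B where "B i = tr (s * Im (\<psi> i))" for i
  define N where "N = (\<Sum>i<D. (A i)\<^sup>2 + (B i)\<^sup>2)"
  have Aj: "A j = 0" "B j = 0" "A k = 0" "B k = 0" using z by (simp_all add: A_def B_def tr_def)
  have NS: "real_of_int N / s\<^sup>2 = (\<Sum>i<D. (real_of_int (A i) / s)\<^sup>2 + (real_of_int (B i) / s)\<^sup>2)"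
    unfolding N_def by (simp add: sum_divide_distrib power_divide add_divide_distrib)
  have cm: "(cmod z)\<^sup>2 = (Re z)\<^sup>2 + (Im z)\<^sup>2" for z by (simp add: cmod_power2)
  have "real_of_int N / s\<^sup>2 \<le> (\<Sum>i<D. (Re (\<psi> i))\<^sup>2 + (Im (\<psi> i))\<^sup>2)"
    unfolding NS A_def B_def by (intro sum_mono add_mono scaled_sq_le s0)
  also have "\<dots> = 1" using u by (simp add: cm)
  finally have "real_of_int N \<le> s\<^sup>2" using s0 by (simp add: divide_le_eq)
  then have "N \<le> 4^m" using ss by simp
  define R where "R = 4^m - N"
  have R0: "R \<ge> 0" using \<open>N \<le> 4^m\<close> R_def by simp
  have "sos4 (int (nat R))" by (rule sos4_nat)
  then obtain a b c d where abcd: "R = a\<^sup>2 + b\<^sup>2 + c\<^sup>2 + d\<^sup>2" using R0 unfolding sos4_def by auto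
  define A' where "A' i = A i + (if i = j then a else if i = k then c else 0)" for i
  define B' where "B' i = B i + (if i = j then b else if i = k then d else 0)" for i
  define \<phi> where "\<phi> i = Complex (real_of_int (A' i) / 2^m) (real_of_int (B' i) / 2^m)" for i
  have ring: "\<forall>i<D. ring_coord m (\<phi> i)"
    unfolding ring_coord_def \<phi>_def complex_ring_form by blast
  have phn: "(cmod (\<phi> i))\<^sup>2 = real_of_int ((A' i)\<^sup>2 + (B' i)\<^sup>2) / s\<^sup>2" for i
    unfolding \<phi>_def s_def by (simp add: cm power_divide add_divide_distrib)
  have pt: "(A' i)\<^sup>2 + (B' i)\<^sup>2 = (A i)\<^sup>2 + (B i)\<^sup>2 + (if i = j then a\<^sup>2 + b\<^sup>2 else 0)
      + (if i = k then c\<^sup>2 + d\<^sup>2 else 0)" for i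
    using Aj jk(3) unfolding A'_def B'_def by auto
  have "(\<Sum>i<D. (A' i)\<^sup>2 + (B' i)\<^sup>2) = N + (a\<^sup>2 + b\<^sup>2) + (c\<^sup>2 + d\<^sup>2)"
    unfolding pt N_def using jk by (simp add: sum.distrib)
  also have "\<dots> = 4^m" using abcd R_def by simp
  finally have sumi: "(\<Sum>i<D. (A' i)\<^sup>2 + (B' i)\<^sup>2) = 4^m" .
  have norm1: "(\<Sum>i<D. (cmod (\<phi> i))\<^sup>2) = 1"
  proof -
    have "(\<Sum>i<D. (cmod (\<phi> i))\<^sup>2) = real_of_int (\<Sum>i<D. (A' i)\<^sup>2 + (B' i)\<^sup>2) / s\<^sup>2"
      unfolding phn by (simp add: sum_divide_distrib)
    also have "\<dots> = 1" unfolding sumi ss using s0 by simp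
    finally show ?thesis .
  qed
  define E where "E i = (real_of_int (A i) / s - Re (\<psi> i))\<^sup>2 + (real_of_int (B i) / s - Im (\<psi> i))\<^sup>2" for i
  have ept: "(cmod (\<phi> i - \<psi> i))\<^sup>2 = E i + (if i = j then (a\<^sup>2 + b\<^sup>2) / s\<^sup>2 else 0)
      + (if i = k then (c\<^sup>2 + d\<^sup>2) / s\<^sup>2 else 0)" for i
  proof -
    have "(cmod (\<phi> i - \<psi> i))\<^sup>2 = (real_of_int (A' i) / s - Re (\<psi> i))\<^sup>2 + (real_of_int (B' i) / s - Im (\<psi> i))\<^sup>2"
      unfolding \<phi>_def s_def by (simp add: cm)
    then show ?thesis using Aj z jk(3) unfolding E_def A'_def B'_def
      by (auto simp: power_divide add_divide_distrib)
  qed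
  have sumE: "(\<Sum>i<D. (cmod (\<phi> i - \<psi> i))\<^sup>2) = (\<Sum>i<D. E i) + real_of_int R / s\<^sup>2"
    unfolding ept using jk by (simp add: sum.distrib abcd add_divide_distrib)
  have E_le: "(\<Sum>i<D. E i) \<le> real D * (2 / s\<^sup>2)"
  proof -
    have "E i \<le> 2 / s\<^sup>2" for i
      using scaled_err_sq[OF s0, of "Re (\<psi> i)"] scaled_err_sq[OF s0, of "Im (\<psi> i)"]
      unfolding E_def A_def B_def by simp
    then have "(\<Sum>i<D. E i) \<le> (\<Sum>i<D. 2 / s\<^sup>2)" by (intro sum_mono)
    then show ?thesis by simp
  qed
  have cs: "(\<Sum>i<D. cmod (\<psi> i)) \<le> sqrt (real D)"
    using cs_sum[of "\<lambda>i. cmod (\<psi> i)" "\<lambda>i. 1" D] u by simp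
  have R_le: "real_of_int R / s\<^sup>2 \<le> 2 * sqrt 2 * sqrt (real D) / s"
  proof -
    have "real_of_int R / s\<^sup>2 = 1 - real_of_int N / s\<^sup>2"
      unfolding R_def using ss s0 by (simp add: diff_divide_distrib)
    also have "\<dots> = (\<Sum>i<D. ((Re (\<psi> i))\<^sup>2 - (real_of_int (A i) / s)\<^sup>2) + ((Im (\<psi> i))\<^sup>2 - (real_of_int (B i) / s)\<^sup>2))"
      unfolding NS using u by (simp add: cm sum_subtractf sum.distrib)
    also have "\<dots> \<le> (\<Sum>i<D. 2 * \<bar>Re (\<psi> i)\<bar> / s + 2 * \<bar>Im (\<psi> i)\<bar> / s)"
      unfolding A_def B_def by (intro sum_mono add_mono scaled_sq s0)
    also have "\<dots> \<le> (\<Sum>i<D. (2 / s) * (sqrt 2 * cmod (\<psi> i)))"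
    proof (rule sum_mono)
      fix i
      have "(2 / s) * (\<bar>Re (\<psi> i)\<bar> + \<bar>Im (\<psi> i)\<bar>) \<le> (2 / s) * (sqrt 2 * cmod (\<psi> i))"
        using abs_re_im s0 by (intro mult_left_mono) auto
      then show "2 * \<bar>Re (\<psi> i)\<bar> / s + 2 * \<bar>Im (\<psi> i)\<bar> / s \<le> (2 / s) * (sqrt 2 * cmod (\<psi> i))"
        by (simp add: algebra_simps)
    qed
    also have "\<dots> = (2 / s) * sqrt 2 * (\<Sum>i<D. cmod (\<psi> i))" by (simp add: sum_distrib_left mult.assoc)
    also have "\<dots> \<le> (2 / s) * sqrt 2 * sqrt (real D)" using cs s0 by (intro mult_left_mono) auto
    finally show ?thesis by simp
  qed
  define t where "t = sqrt (2*D) / 2^m"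
  have t0: "t \<ge> 0" unfolding t_def by simp
  have tt: "t\<^sup>2 = real D * (2 / s\<^sup>2)" unfolding t_def s_def by (simp add: power_divide)
  have t2: "2 * sqrt 2 * sqrt (real D) / s = 2 * t" unfolding t_def s_def by (simp add: real_sqrt_mult)
  have "t * t \<le> t * 1" using t0 t1 unfolding t_def[symmetric] by (intro mult_left_mono) auto
  then have "t\<^sup>2 \<le> t" by (simp add: power2_eq_square)
  have "(\<Sum>i<D. (cmod (\<phi> i - \<psi> i))\<^sup>2) \<le> t\<^sup>2 + 2 * t"
    unfolding sumE using E_le R_le tt t2 by linarith
  also have "\<dots> \<le> 3 * t" using \<open>t\<^sup>2 \<le> t\<close> by linarith
  finally show ?thesis using norm1 ring unfolding t_def by blast
qed

lemma pow2L:
  assumes "0 < \<epsilon>" "\<epsilon> < 1"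
  shows "1 \<le> \<epsilon>\<^sup>2 * 2 ^ nat \<lceil>2 * log 2 (1/\<epsilon>)\<rceil>"
proof -
  define L where "L = nat \<lceil>2 * log 2 (1/\<epsilon>)\<rceil>"
  have "2 * log 2 (1/\<epsilon>) \<le> real L" unfolding L_def by (rule real_nat_ceiling_ge)
  then have "(2::real) powr (2 * log 2 (1/\<epsilon>)) \<le> 2 powr real L" by (intro powr_mono) auto
  moreover have "(2::real) powr real L = 2^L" by (simp add: powr_realpow)
  moreover have "(2::real) powr (2 * log 2 (1/\<epsilon>)) = (1/\<epsilon>) * (1/\<epsilon>)"
  proof -
    have "(2::real) powr (2 * log 2 (1/\<epsilon>)) = 2 powr (log 2 (1/\<epsilon>) + log 2 (1/\<epsilon>))" by simp
    also have "\<dots> = 2 powr (log 2 (1/\<epsilon>)) * 2 powr (log 2 (1/\<epsilon>))" by (rule powr_add)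
    also have "\<dots> = (1/\<epsilon>) * (1/\<epsilon>)" using assms by simp
    finally show ?thesis .
  qed
  ultimately have "(1/\<epsilon>) * (1/\<epsilon>) \<le> 2^L" by simp
  then have "\<epsilon>\<^sup>2 * ((1/\<epsilon>) * (1/\<epsilon>)) \<le> \<epsilon>\<^sup>2 * 2^L" by (intro mult_left_mono) auto
  then show ?thesis using assms unfolding L_def[symmetric] by (simp add: power2_eq_square field_simps)
qed

lemma tbound:
  assumes e: "0 < \<epsilon>" "\<epsilon> < 1" and D: "D \<le> 2^(n+1)"
  shows "sqrt (real (2*D)) / 2^((n+3) div 2 + 10 + nat \<lceil>2 * log 2 (1/\<epsilon>)\<rceil>) \<le> \<epsilon>\<^sup>2/1024"
proof -
  define L where "L = nat \<lceil>2 * log 2 (1/\<epsilon>)\<rceil>"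
  define m where "m = (n+3) div 2 + 10 + L"
  define P :: real where "P = 2^(n+2)"
  define Q :: real where "Q = 2^L"
  have eQ: "1 \<le> \<epsilon>\<^sup>2 * Q" unfolding Q_def L_def by (rule pow2L[OF e])
  have "n + 2 + 20 + 2*L \<le> 2*m" unfolding m_def by simp
  then have "(2::real)^(n + 2 + 20 + 2*L) \<le> 2^(2*m)" by (intro power_increasing) auto
  then have mm: "P * 2^20 * Q\<^sup>2 \<le> (2^m)\<^sup>2" unfolding P_def Q_def
    by (simp add: power_add power_mult power2_eq_square mult_ac)
  have D2: "real (2*D) \<le> P"
  proof -
    have "D \<le> 2*2^n" using D by simp
    then have "real D \<le> real (2*2^n)" by (simp only: of_nat_le_iff)
    then show ?thesis by (simp add: P_def)
  qed
  have "P * 2^20 * 1 \<le> P * 2^20 * (\<epsilon>\<^sup>2 * Q)\<^sup>2"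
  proof -
    have "1 \<le> (\<epsilon>\<^sup>2 * Q)\<^sup>2" using eQ by (metis one_le_power)
    then show ?thesis unfolding P_def by (intro mult_left_mono) auto
  qed
  also have "\<dots> = (\<epsilon>\<^sup>2)\<^sup>2 * (P * 2^20 * Q\<^sup>2)" by (simp add: power_mult_distrib mult_ac)
  also have "\<dots> \<le> (\<epsilon>\<^sup>2)\<^sup>2 * (2^m)\<^sup>2" using mm by (intro mult_left_mono) auto
  finally have "real (2*D) * 2^20 \<le> (\<epsilon>\<^sup>2 * 2^m)\<^sup>2" using D2 by (simp add: power_mult_distrib)
  moreover have "(sqrt (real (2*D)) * 1024)\<^sup>2 = real (2*D) * 2^20" by (simp add: power_mult_distrib)
  ultimately have "(sqrt (real (2*D)) * 1024)\<^sup>2 \<le> (\<epsilon>\<^sup>2 * 2^m)\<^sup>2" by simp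
  then have "sqrt (real (2*D)) * 1024 \<le> \<epsilon>\<^sup>2 * 2^m" by (rule power2_le_imp_le) auto
  then show ?thesis unfolding m_def[symmetric] L_def[symmetric] by (simp add: field_simps)
qed

lemma lin_help:
  fixes A C l r ce :: real
  assumes "A \<le> r + 3/2" "r \<le> ce" "C \<le> 2*l + 1" "0 < l"
  shows "A + 10 + C \<le> ce + 13*(l+1)"
proof -
  have "13*(l+1) = 13*l + 13" by simp
  then show ?thesis using assms by linarith
qed

lemma mbound:
  assumes e: "0 < \<epsilon>" "\<epsilon> < 1"
  shows "real ((n+3) div 2 + 10 + nat \<lceil>2 * log 2 (1/\<epsilon>)\<rceil>) \<le> real_of_int \<lceil>real n / 2\<rceil> + 13 * (log 2 (1/\<epsilon>) + 1)"
proof -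
  have lp: "log 2 (1/\<epsilon>) > 0" using e by simp
  have a: "real ((n+3) div 2) \<le> real n / 2 + 3/2"
  proof -
    have "2 * ((n+3) div 2) \<le> n + 3" by simp
    then have "real (2 * ((n+3) div 2)) \<le> real (n+3)" by (simp only: of_nat_le_iff)
    then show ?thesis by simp
  qed
  have b: "real n / 2 \<le> real_of_int \<lceil>real n / 2\<rceil>" by (rule le_of_int_ceiling)
  have c: "real (nat \<lceil>2 * log 2 (1/\<epsilon>)\<rceil>) \<le> 2 * log 2 (1/\<epsilon>) + 1"
  proof -
    have "0 \<le> \<lceil>2 * log 2 (1/\<epsilon>)\<rceil>" using lp by simp
    then have "real (nat \<lceil>2 * log 2 (1/\<epsilon>)\<rceil>) = real_of_int \<lceil>2 * log 2 (1/\<epsilon>)\<rceil>" by simp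
    also have "\<dots> \<le> 2 * log 2 (1/\<epsilon>) + 1" by (rule of_int_ceiling_le_add_one)
    finally show ?thesis .
  qed
  have "real ((n+3) div 2 + 10 + nat \<lceil>2 * log 2 (1/\<epsilon>)\<rceil>) = real ((n+3) div 2) + 10 + real (nat \<lceil>2 * log 2 (1/\<epsilon>)\<rceil>)"
    by simp
  then show ?thesis using lin_help[OF a b c lp] by simp
qed

theorem lemma6:
  "\<exists>C :: real. \<forall>(n::nat) (\<psi>::complex vec) (\<epsilon>::real).
     1 \<le> n \<and> dim_vec \<psi> = 2 ^ n \<and> unit_cvec \<psi> \<and> 0 < \<epsilon> \<and> \<epsilon> < 1 \<longrightarrow>
     ((\<exists>m::nat. real m \<le> real_of_int \<lceil>real n / 2\<rceil> + C * (log 2 (1 / \<epsilon>) + 1) \<and>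
        (\<exists>\<phi>1 \<phi>2 :: complex vec.
           dim_vec \<phi>1 = 2 ^ (n + 1) \<and> dim_vec \<phi>2 = 2 ^ (n + 1) \<and>
           unit_cvec \<phi>1 \<and> unit_cvec \<phi>2 \<and>
           (\<forall>i < 2 ^ (n + 1). ring_coord m (\<phi>1 $ i) \<and> ring_coord m (\<phi>2 $ i)) \<and>
           frobenius_norm (refl_op \<phi>1 * refl_op \<phi>2 - kron_id2 (refl_op \<psi>)) \<le> \<epsilon>))
     \<and> (2 \<le> card {i. i < 2 ^ n \<and> \<psi> $ i = 0} \<longrightarrow>
        (\<exists>m::nat. real m \<le> real_of_int \<lceil>real n / 2\<rceil> + C * (log 2 (1 / \<epsilon>) + 1) \<and>
          (\<exists>\<phi> :: complex vec.
             dim_vec \<phi> = 2 ^ n \<and> unit_cvec \<phi> \<and>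
             (\<forall>i < 2 ^ n. ring_coord m (\<phi> $ i)) \<and>
             frobenius_norm (refl_op \<phi> - refl_op \<psi>) \<le> \<epsilon>))))"
proof (rule exI[of _ 13], intro allI impI)
  fix n :: nat and \<psi> :: "complex vec" and \<epsilon> :: real
  assume H: "1 \<le> n \<and> dim_vec \<psi> = 2 ^ n \<and> unit_cvec \<psi> \<and> 0 < \<epsilon> \<and> \<epsilon> < 1"
  then have n1: "1 \<le> n" and d\<psi>: "dim_vec \<psi> = 2^n" and u\<psi>: "unit_cvec \<psi>" and e0: "0 < \<epsilon>" and e1: "\<epsilon> < 1"
    by auto
  define D :: nat where "D = 2^n"
  have D2: "2 \<le> D" unfolding D_def using n1 by (metis One_nat_def le_add_diff_inverse power_increasing_iff one_less_numeral_iff semiring_norm(76) power_one_right)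
  define m where "m = (n+3) div 2 + 10 + nat \<lceil>2 * log 2 (1/\<epsilon>)\<rceil>"
  have mb: "real m \<le> real_of_int \<lceil>real n / 2\<rceil> + 13 * (log 2 (1 / \<epsilon>) + 1)"
    unfolding m_def by (rule mbound[OF e0 e1])
  define T1 where "T1 = sqrt (real (2*(2*D))) / 2^m"
  define T0 where "T0 = sqrt (real (2*D)) / 2^m"
  have T1b: "T1 \<le> \<epsilon>\<^sup>2/1024" unfolding T1_def m_def by (rule tbound[OF e0 e1]) (simp add: D_def)
  have T0b: "T0 \<le> \<epsilon>\<^sup>2/1024" unfolding T0_def m_def by (rule tbound[OF e0 e1]) (simp add: D_def)
  have T1p: "0 \<le> T1" unfolding T1_def by simp
  have T0p: "0 \<le> T0" unfolding T0_def by simp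
  have ee: "\<epsilon>\<^sup>2 \<le> 1" using e0 e1 by (simp add: power_le_one)
  have \<psi>u: "(\<Sum>i<D. (cmod (\<psi> $ i))\<^sup>2) = 1" using unit_sum[OF u\<psi>] d\<psi> D_def by simp
  have vec_unit: "unit_cvec (vec N f)" if "(\<Sum>i<N. (cmod (f i))\<^sup>2) = 1" for N f
    unfolding unit_cvec_def using that by simp
  have vec_sum: "(\<Sum>i<N. g (vec N f $ i) i) = (\<Sum>i<N. g (f i) i)" for N f and g :: "complex \<Rightarrow> nat \<Rightarrow> real"
    by (rule sum.cong) auto
  have P1: "\<exists>\<phi>1 \<phi>2 :: complex vec.
           dim_vec \<phi>1 = 2 ^ (n + 1) \<and> dim_vec \<phi>2 = 2 ^ (n + 1) \<and>
           unit_cvec \<phi>1 \<and> unit_cvec \<phi>2 \<and>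
           (\<forall>i < 2 ^ (n + 1). ring_coord m (\<phi>1 $ i) \<and> ring_coord m (\<phi>2 $ i)) \<and>
           frobenius_norm (refl_op \<phi>1 * refl_op \<phi>2 - kron_id2 (refl_op \<psi>)) \<le> \<epsilon>"
  proof -
    have au: "(\<Sum>k<2*D. (cmod (ea \<psi> k))\<^sup>2) = 1" unfolding ea_unit using \<psi>u .
    have bu: "(\<Sum>k<2*D. (cmod (eb \<psi> k))\<^sup>2) = 1" unfolding eb_unit using \<psi>u .
    have t1: "sqrt (real (2*(2*D))) / 2^m \<le> 1" using T1b ee unfolding T1_def by linarith
    obtain f1 where f1: "(\<Sum>i<2*D. (cmod (f1 i))\<^sup>2) = 1" "\<forall>i<2*D. ring_coord m (f1 i)"
        "(\<Sum>i<2*D. (cmod (f1 i - ea \<psi> i))\<^sup>2) \<le> 3 * T1"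
      using core[OF au, of 1 3 m] D2 t1 unfolding T1_def by (auto simp: ea_def)
    obtain f2 where f2: "(\<Sum>i<2*D. (cmod (f2 i))\<^sup>2) = 1" "\<forall>i<2*D. ring_coord m (f2 i)"
        "(\<Sum>i<2*D. (cmod (f2 i - eb \<psi> i))\<^sup>2) \<le> 3 * T1"
      using core[OF bu, of 0 2 m] D2 t1 unfolding T1_def by (auto simp: eb_def)
    define \<phi>1 where "\<phi>1 = vec (2*D) f1"
    define \<phi>2 where "\<phi>2 = vec (2*D) f2"
    define \<delta> where "\<delta> = sqrt (3*T1)"
    have \<delta>0: "0 \<le> \<delta>" unfolding \<delta>_def using T1p by simp
    have \<delta>2: "\<delta>\<^sup>2 = 3*T1" unfolding \<delta>_def using T1p by simp
    have S1: "(\<Sum>k<2*D. (cmod (\<phi>1 $ k - ea \<psi> k))\<^sup>2) \<le> \<delta>\<^sup>2"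
      unfolding \<phi>1_def \<delta>2 using f1(3) by (subst vec_sum[where g="\<lambda>z k. (cmod (z - ea \<psi> k))\<^sup>2"])
    have S2: "(\<Sum>k<2*D. (cmod (\<phi>2 $ k - eb \<psi> k))\<^sup>2) \<le> \<delta>\<^sup>2"
      unfolding \<phi>2_def \<delta>2 using f2(3) by (subst vec_sum[where g="\<lambda>z k. (cmod (z - eb \<psi> k))\<^sup>2"])
    have u1: "unit_cvec \<phi>1" unfolding \<phi>1_def by (rule vec_unit[OF f1(1)])
    have u2: "unit_cvec \<phi>2" unfolding \<phi>2_def by (rule vec_unit[OF f2(1)])
    have dD: "dim_vec \<psi> = D" using d\<psi> D_def by simp
    have fb: "frobenius_norm (refl_op \<phi>1 * refl_op \<phi>2 - kron_id2 (refl_op \<psi>)) \<le> 17 * \<delta>"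
      by (rule prod_bound[OF _ _ dD u1 u2 u\<psi> S1 S2 \<delta>0]) (simp_all add: \<phi>1_def \<phi>2_def)
    have "\<delta> \<le> \<epsilon> / 17"
    proof -
      have "3*T1 \<le> \<epsilon>\<^sup>2/289" using T1b T1p by linarith
      moreover have "(\<epsilon>/17)\<^sup>2 = \<epsilon>\<^sup>2/289" by (simp add: power_divide)
      ultimately have "3*T1 \<le> (\<epsilon>/17)\<^sup>2" by simp
      then have "sqrt (3*T1) \<le> sqrt ((\<epsilon>/17)\<^sup>2)" by (rule real_sqrt_le_mono)
      then show ?thesis unfolding \<delta>_def using e0 by simp
    qed
    then have "frobenius_norm (refl_op \<phi>1 * refl_op \<phi>2 - kron_id2 (refl_op \<psi>)) \<le> \<epsilon>" using fb by linarith
    moreover have "dim_vec \<phi>1 = 2 ^ (n + 1)" "dim_vec \<phi>2 = 2 ^ (n + 1)" unfolding \<phi>1_def \<phi>2_def D_def by simp_all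
    moreover have "\<forall>i < 2 ^ (n + 1). ring_coord m (\<phi>1 $ i) \<and> ring_coord m (\<phi>2 $ i)"
      using f1(2) f2(2) unfolding \<phi>1_def \<phi>2_def D_def by simp
    ultimately show ?thesis using u1 u2 by blast
  qed
  have P2: "\<exists>\<phi> :: complex vec.
             dim_vec \<phi> = 2 ^ n \<and> unit_cvec \<phi> \<and>
             (\<forall>i < 2 ^ n. ring_coord m (\<phi> $ i)) \<and>
             frobenius_norm (refl_op \<phi> - refl_op \<psi>) \<le> \<epsilon>"
    if card2: "2 \<le> card {i. i < 2 ^ n \<and> \<psi> $ i = 0}"
  proof -
    define Z where "Z = {i. i < 2 ^ n \<and> \<psi> $ i = 0}"
    have fZ: "finite Z" unfolding Z_def by simp
    have "\<not> (\<forall>a\<in>Z. \<forall>b\<in>Z. a = b)"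
    proof
      assume "\<forall>a\<in>Z. \<forall>b\<in>Z. a = b"
      then have "card Z \<le> Suc 0" using card_le_Suc0_iff_eq[OF fZ] by blast
      then show False using card2 unfolding Z_def by simp
    qed
    then obtain j k where jk: "j \<in> Z" "k \<in> Z" "j \<noteq> k" by blast
    have t0: "sqrt (real (2*D)) / 2^m \<le> 1" using T0b ee unfolding T0_def by linarith
    obtain f where f: "(\<Sum>i<D. (cmod (f i))\<^sup>2) = 1" "\<forall>i<D. ring_coord m (f i)"
        "(\<Sum>i<D. (cmod (f i - \<psi> $ i))\<^sup>2) \<le> 3 * T0"
      using core[where \<psi>="\<lambda>i. \<psi> $ i" and D=D and j=j and k=k and m=m] \<psi>u jk t0
      unfolding T0_def Z_def D_def by auto
    define \<phi> where "\<phi> = vec D f"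
    have u: "unit_cvec \<phi>" unfolding \<phi>_def by (rule vec_unit[OF f(1)])
    have dD: "dim_vec \<psi> = D" using d\<psi> D_def by simp
    have fb: "frobenius_norm (refl_op \<phi> - refl_op \<psi>) \<le> 4 * sqrt (\<Sum>i<D. (cmod (\<phi> $ i - \<psi> $ i))\<^sup>2)"
      by (rule refl_dist[OF _ dD u u\<psi>]) (simp add: \<phi>_def)
    have "(\<Sum>i<D. (cmod (\<phi> $ i - \<psi> $ i))\<^sup>2) \<le> 3 * T0"
      unfolding \<phi>_def using f(3) by (subst vec_sum[where g="\<lambda>z k. (cmod (z - \<psi> $ k))\<^sup>2"])
    also have "\<dots> \<le> (\<epsilon>/4)\<^sup>2"
    proof -
      have "3*T0 \<le> \<epsilon>\<^sup>2/16" using T0b T0p by linarith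
      moreover have "(\<epsilon>/4)\<^sup>2 = \<epsilon>\<^sup>2/16" by (simp add: power_divide)
      ultimately show ?thesis by simp
    qed
    finally have "sqrt (\<Sum>i<D. (cmod (\<phi> $ i - \<psi> $ i))\<^sup>2) \<le> sqrt ((\<epsilon>/4)\<^sup>2)" by (rule real_sqrt_le_mono)
    then have "sqrt (\<Sum>i<D. (cmod (\<phi> $ i - \<psi> $ i))\<^sup>2) \<le> \<epsilon>/4" using e0 by simp
    then have "frobenius_norm (refl_op \<phi> - refl_op \<psi>) \<le> \<epsilon>" using fb by linarith
    moreover have "dim_vec \<phi> = 2 ^ n" unfolding \<phi>_def D_def by simp
    moreover have "\<forall>i < 2 ^ n. ring_coord m (\<phi> $ i)" using f(2) unfolding \<phi>_def D_def by simp
    ultimately show ?thesis using u by blast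
  qed
  show "(\<exists>m::nat. real m \<le> real_of_int \<lceil>real n / 2\<rceil> + 13 * (log 2 (1 / \<epsilon>) + 1) \<and>
        (\<exists>\<phi>1 \<phi>2 :: complex vec.
           dim_vec \<phi>1 = 2 ^ (n + 1) \<and> dim_vec \<phi>2 = 2 ^ (n + 1) \<and>
           unit_cvec \<phi>1 \<and> unit_cvec \<phi>2 \<and>
           (\<forall>i < 2 ^ (n + 1). ring_coord m (\<phi>1 $ i) \<and> ring_coord m (\<phi>2 $ i)) \<and>
           frobenius_norm (refl_op \<phi>1 * refl_op \<phi>2 - kron_id2 (refl_op \<psi>)) \<le> \<epsilon>))
     \<and> (2 \<le> card {i. i < 2 ^ n \<and> \<psi> $ i = 0} \<longrightarrow>
        (\<exists>m::nat. real m \<le> real_of_int \<lceil>real n / 2\<rceil> + 13 * (log 2 (1 / \<epsilon>) + 1) \<and>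
          (\<exists>\<phi> :: complex vec.
             dim_vec \<phi> = 2 ^ n \<and> unit_cvec \<phi> \<and>
             (\<forall>i < 2 ^ n. ring_coord m (\<phi> $ i)) \<and>
             frobenius_norm (refl_op \<phi> - refl_op \<psi>) \<le> \<epsilon>)))"
    using mb P1 P2 by blast
qed

end
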